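(* Let $G$ be a group acting geometrically (i.e.\ properly and cocompactly by isometries) on a CAT(0) space $X$. For every $g\in G$, $$\mathcal{F}_g = L(Z_g),$$ where $\mathcal{F}_g=\{\alpha\in\partial X \mid g\alpha=\alpha\}$ is the fixed-point set of $g$ in the boundary $\partial X$, $Z_g=\{v\in G\mid gv=vg\}$ is the centralizer of $g$, and $L(Z_g)$ is the limit set of $Z_g$ in $\partial X$.
   Context: A CAT(0) space admitting a geometric group action is proper. For a proper CAT(0) space $X$, $\partial X$ denotes its visual boundary: the set of asymptotic classes of geodesic rays (two rays $\xi,\zeta$ are asymptotic if $\sup_{t\ge0}d(\xi(t),\zeta(t))<\infty$), with the cone topology, which makes $X\cup\partial X$ a compact metrizable space containing $X$ as an open dense subspace. An isometry $g$ of $X$ acts on $\partial X$ by $g(\xi(\infty))=(g\circ\xi)(\infty)$. For a subset $A\subset G$, the limit set is $L(A)=\overline{Ax_0}\cap\partial X$, where $x_0\in X$ and the closure of the orbit $Ax_0$ is taken in $X\cup\partial X$; this does not depend on the choice of $x_0$. *)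

theory Defs
  imports "HOL-Analysis.Analysis" "HOL-Algebra.Group_Action"
begin

definition geodesic_segment :: "(real \<Rightarrow> 'a::metric_space) \<Rightarrow> 'a \<Rightarrow> 'a \<Rightarrow> bool" where
  "geodesic_segment c x y \<longleftrightarrow> c 0 = x \<and> c (dist x y) = y \<and>
     (\<forall>s\<in>{0..dist x y}. \<forall>t\<in>{0..dist x y}. dist (c s) (c t) = \<bar>s - t\<bar>)"

definition eucl_seg :: "complex \<Rightarrow> complex \<Rightarrow> real \<Rightarrow> complex" where
  "eucl_seg a b s = a + complex_of_real (s / cmod (b - a)) * (b - a)"

text \<open>Pairs (point on the geodesic triangle, corresponding point on the comparison triangle).\<close>
definition comparison_pairs ::
  "'a::metric_space \<Rightarrow> 'a \<Rightarrow> 'a \<Rightarrow> (real \<Rightarrow> 'a) \<Rightarrow> (real \<Rightarrow> 'a) \<Rightarrow> (real \<Rightarrow> 'a)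
     \<Rightarrow> complex \<Rightarrow> complex \<Rightarrow> complex \<Rightarrow> ('a \<times> complex) set" where
  "comparison_pairs x y z c1 c2 c3 a b e =
     {(c1 s, eucl_seg a b s) | s. s \<in> {0..dist x y}} \<union>
     {(c2 s, eucl_seg b e s) | s. s \<in> {0..dist y z}} \<union>
     {(c3 s, eucl_seg e a s) | s. s \<in> {0..dist z x}}"

definition CAT0 :: "'a::metric_space itself \<Rightarrow> bool" where
  "CAT0 _ \<longleftrightarrow>
     (\<forall>x y::'a. \<exists>c. geodesic_segment c x y) \<and>
     (\<forall>(x::'a) y z c1 c2 c3 a b e.
        geodesic_segment c1 x y \<and> geodesic_segment c2 y z \<and> geodesic_segment c3 z x \<and>
        dist a b = dist x y \<and> dist b e = dist y z \<and> dist e a = dist z x \<longrightarrow>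
        (\<forall>(p, p')\<in>comparison_pairs x y z c1 c2 c3 a b e.
           \<forall>(q, q')\<in>comparison_pairs x y z c1 c2 c3 a b e. dist p q \<le> dist p' q'))"

definition geodesic_ray :: "(real \<Rightarrow> 'a::metric_space) \<Rightarrow> bool" where
  "geodesic_ray c \<longleftrightarrow> (\<forall>s\<ge>0. \<forall>t\<ge>0. dist (c s) (c t) = \<bar>s - t\<bar>)"

definition asymptotic :: "(real \<Rightarrow> 'a::metric_space) \<Rightarrow> (real \<Rightarrow> 'a) \<Rightarrow> bool" where
  "asymptotic c c' \<longleftrightarrow> (\<exists>B. \<forall>t\<ge>0. dist (c t) (c' t) \<le> B)"

text \<open>Boundary points are asymptotic classes of geodesic rays.\<close>
definition ray_class :: "(real \<Rightarrow> 'a::metric_space) \<Rightarrow> (real \<Rightarrow> 'a) set" where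
  "ray_class c = {c'. geodesic_ray c' \<and> asymptotic c c'}"

definition visual_boundary :: "'a::metric_space itself \<Rightarrow> (real \<Rightarrow> 'a) set set" where
  "visual_boundary _ = {ray_class c | c. geodesic_ray c}"

definition boundary_map :: "('a::metric_space \<Rightarrow> 'a) \<Rightarrow> (real \<Rightarrow> 'a) set \<Rightarrow> (real \<Rightarrow> 'a) set" where
  "boundary_map h \<alpha> = ray_class (h \<circ> (SOME c. c \<in> \<alpha>))"

definition boundary_fixed_points :: "('a::metric_space \<Rightarrow> 'a) \<Rightarrow> (real \<Rightarrow> 'a) set set" where
  "boundary_fixed_points h = {\<alpha> \<in> visual_boundary TYPE('a). boundary_map h \<alpha> = \<alpha>}"

text \<open>Cone topology: \<alpha> lies in the closure (in X \<union> \<partial>X) of S \<subseteq> X iff every basic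
  neighbourhood U(c,r,\<epsilon>) = {x. d(x0,x) > r, d(c_x(r), c(r)) < \<epsilon>} of \<alpha> meets S, where c is
  the ray in \<alpha> issuing from the base point x0 and c_x the geodesic from x0 to x.\<close>
definition in_cone_closure :: "'a::metric_space \<Rightarrow> 'a set \<Rightarrow> (real \<Rightarrow> 'a) set \<Rightarrow> bool" where
  "in_cone_closure x0 S \<alpha> \<longleftrightarrow>
     (\<exists>c\<in>\<alpha>. c 0 = x0 \<and>
        (\<forall>r>0. \<forall>\<epsilon>>0. \<exists>x\<in>S. dist x0 x > r \<and>
           (\<exists>cx. geodesic_segment cx x0 x \<and> dist (cx r) (c r) < \<epsilon>)))"

text \<open>Limit set L(A) = closure of A x0 in X \<union> \<partial>X, intersected with \<partial>X.\<close>
definition limit_set :: "('g \<Rightarrow> 'a::metric_space \<Rightarrow> 'a) \<Rightarrow> 'a \<Rightarrow> 'g set \<Rightarrow> (real \<Rightarrow> 'a) set set" where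
  "limit_set \<phi> x0 A =
     {\<alpha> \<in> visual_boundary TYPE('a). in_cone_closure x0 ((\<lambda>v. \<phi> v x0) ` A) \<alpha>}"

text \<open>Proper action in the sense of Bridson--Haefliger I.8.2 and cocompactness.\<close>
definition geometric_action :: "('g, 'b) monoid_scheme \<Rightarrow> ('g \<Rightarrow> 'a::metric_space \<Rightarrow> 'a) \<Rightarrow> bool" where
  "geometric_action G \<phi> \<longleftrightarrow>
     group_action G (UNIV :: 'a set) \<phi> \<and>
     (\<forall>v\<in>carrier G. \<forall>x y. dist (\<phi> v x) (\<phi> v y) = dist x y) \<and>
     (\<forall>x. \<exists>r>0. finite {v \<in> carrier G. \<phi> v ` ball x r \<inter> ball x r \<noteq> {}}) \<and>
     (\<exists>K. compact K \<and> (\<Union>v\<in>carrier G. \<phi> v ` K) = UNIV)"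

definition centralizer_of :: "('g, 'b) monoid_scheme \<Rightarrow> 'g \<Rightarrow> 'g set" where
  "centralizer_of G g = {v \<in> carrier G. g \<otimes>\<^bsub>G\<^esub> v = v \<otimes>\<^bsub>G\<^esub> g}"

end

theory Submission
  imports Defs
begin


lemma tri_exists:
  fixes a b c :: real
  assumes "0 \<le> a" "0 \<le> b" "0 \<le> c" "a \<le> b + c" "b \<le> a + c" "c \<le> a + b"
  shows "\<exists>x y. x\<^sup>2 + y\<^sup>2 = b\<^sup>2 \<and> (x - a)\<^sup>2 + y\<^sup>2 = c\<^sup>2 \<and> 2 * a * x = a\<^sup>2 + b\<^sup>2 - c\<^sup>2"
proof (cases "a = 0")
  case True
  then have "b = c" using assms by auto
  then show ?thesis using True by (intro exI[of _ b] exI[of _ 0]) auto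
next
  case False
  then have a0: "a > 0" using assms by auto
  define x where "x = (a\<^sup>2 + b\<^sup>2 - c\<^sup>2) / (2 * a)"
  have ax: "2 * a * x = a\<^sup>2 + b\<^sup>2 - c\<^sup>2" using a0 by (simp add: x_def)
  have "\<bar>2*a*x\<bar> \<le> 2*a*b"
  proof -
    have "c\<^sup>2 \<le> (a+b)\<^sup>2" using assms by (simp add: power_mono)
    moreover have "(a-b)\<^sup>2 \<le> c\<^sup>2"
    proof -
      have "\<bar>a - b\<bar> \<le> c" using assms by auto
      then show ?thesis using abs_le_square_iff[of "a-b" c] assms(3) by auto
    qed
    ultimately show ?thesis unfolding ax by (auto simp: power2_eq_square algebra_simps abs_if)
  qed
  then have "\<bar>x\<bar> \<le> b" using a0 by (simp add: abs_mult)
  then have xb: "x\<^sup>2 \<le> b\<^sup>2" by (metis abs_le_square_iff abs_of_nonneg assms(2))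
  define y where "y = sqrt (b\<^sup>2 - x\<^sup>2)"
  have y2: "y\<^sup>2 = b\<^sup>2 - x\<^sup>2" using xb by (simp add: y_def)
  have "(x - a)\<^sup>2 + y\<^sup>2 = c\<^sup>2" using y2 ax by (simp add: power2_eq_square algebra_simps)
  then show ?thesis using y2 ax by (intro exI[of _ x] exI[of _ y]) auto
qed

lemma geodesic_segment_rev:
  assumes "geodesic_segment c x y"
  shows "geodesic_segment (\<lambda>s. c (dist x y - s)) y x"
  using assms unfolding geodesic_segment_def by (auto simp: dist_commute abs_minus_commute)

lemma geodesic_segment_dist:
  assumes "geodesic_segment c x y" "s \<in> {0..dist x y}" "t \<in> {0..dist x y}"
  shows "dist (c s) (c t) = \<bar>s - t\<bar>"
  using assms unfolding geodesic_segment_def by auto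

lemma CAT0_geodesic:
  assumes "CAT0 TYPE('a::metric_space)"
  shows "\<exists>c. geodesic_segment c (x::'a) y"
  using assms unfolding CAT0_def by auto

lemma CMP:
  fixes p q r :: "'a::metric_space"
  assumes cat: "CAT0 TYPE('a)"
    and g1: "geodesic_segment c1 p q" and g3: "geodesic_segment c3 p r"
    and s1: "s1 \<in> {0..dist p q}" and s2: "s2 \<in> {0..dist p r}"
    and B: "cmod B = dist p q" and E: "cmod E = dist p r" and BE: "cmod (B - E) = dist q r"
  shows "dist (c1 s1) (c3 s2) \<le> cmod (complex_of_real (s1 / dist p q) * B - complex_of_real (s2 / dist p r) * E)"
proof -
  obtain c2 where g2: "geodesic_segment c2 q r" using CAT0_geodesic[OF cat] by blast
  define c3' where "c3' = (\<lambda>s. c3 (dist p r - s))"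
  have g3': "geodesic_segment c3' r p" unfolding c3'_def by (rule geodesic_segment_rev[OF g3])
  have cmp: "\<forall>(pp, pp')\<in>comparison_pairs p q r c1 c2 c3' 0 B E.
           \<forall>(qq, qq')\<in>comparison_pairs p q r c1 c2 c3' 0 B E. dist pp qq \<le> dist pp' qq'"
    using cat g1 g2 g3' B E BE unfolding CAT0_def
    by (auto simp: dist_commute dist_complex_def norm_minus_commute)
  have m1: "(c1 s1, eucl_seg 0 B s1) \<in> comparison_pairs p q r c1 c2 c3' 0 B E"
    using s1 unfolding comparison_pairs_def by blast
  have "dist r p - s2 \<in> {0..dist r p}" using s2 by (auto simp: dist_commute)
  then have m3: "(c3' (dist r p - s2), eucl_seg E 0 (dist r p - s2)) \<in> comparison_pairs p q r c1 c2 c3' 0 B E"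
    unfolding comparison_pairs_def by blast
  have e1: "c3' (dist r p - s2) = c3 s2" by (simp add: c3'_def dist_commute)
  have e2: "eucl_seg 0 B s1 = complex_of_real (s1 / dist p q) * B"
    by (simp add: eucl_seg_def B)
  have e3: "eucl_seg E 0 (dist r p - s2) = complex_of_real (s2 / dist p r) * E"
  proof (cases "dist p r = 0")
    case True then have "E = 0" using E by simp
    then show ?thesis by (simp add: eucl_seg_def)
  next
    case False
    then have "dist p r > 0" by simp
    then show ?thesis using E
      by (simp add: eucl_seg_def dist_commute field_simps)
  qed
  have "dist (c1 s1) (c3' (dist r p - s2)) \<le> dist (eucl_seg 0 B s1) (eucl_seg E 0 (dist r p - s2))"
    using cmp m1 m3 by fast
  then show ?thesis using e1 e2 e3 by (simp add: dist_complex_def)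
qed

lemma comp_tri:
  fixes p q r :: "'a::metric_space"
  shows "\<exists>x y. x\<^sup>2 + y\<^sup>2 = (dist p r)\<^sup>2 \<and> (x - dist p q)\<^sup>2 + y\<^sup>2 = (dist q r)\<^sup>2
     \<and> 2 * dist p q * x = (dist p q)\<^sup>2 + (dist p r)\<^sup>2 - (dist q r)\<^sup>2"
proof -
  have "dist p q \<le> dist p r + dist q r" "dist p r \<le> dist p q + dist q r" "dist q r \<le> dist p q + dist p r"
    by (metis dist_commute dist_triangle)+
  then show ?thesis by (intro tri_exists) auto
qed

lemma cmod_xy: "cmod (Complex x y) = sqrt (x\<^sup>2 + y\<^sup>2)"
  by (simp add: cmod_def)

lemma C1:
  fixes p q r :: "'a::metric_space"
  assumes cat: "CAT0 TYPE('a)"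
    and g1: "geodesic_segment c1 p q" and g3: "geodesic_segment c3 p r"
    and t: "0 \<le> t" "t \<le> 1"
  shows "dist (c1 (t * dist p q)) (c3 (t * dist p r)) \<le> t * dist q r"
proof -
  obtain x y where xy: "x\<^sup>2 + y\<^sup>2 = (dist p r)\<^sup>2" "(x - dist p q)\<^sup>2 + y\<^sup>2 = (dist q r)\<^sup>2"
    using comp_tri[of p r q] by blast
  define B where "B = complex_of_real (dist p q)"
  define E where "E = Complex x y"
  have B: "cmod B = dist p q" by (simp add: B_def)
  have E: "cmod E = dist p r" using xy by (simp add: E_def cmod_xy)
  have BE: "cmod (B - E) = dist q r"
  proof -
    have "B - E = Complex (dist p q - x) (- y)" by (simp add: B_def E_def complex_eq_iff)
    then show ?thesis using xy by (simp add: cmod_xy power2_commute)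
  qed
  have s1: "t * dist p q \<in> {0..dist p q}" using t mult_left_le_one_le[of "dist p q" t] by auto
  have s2: "t * dist p r \<in> {0..dist p r}" using t mult_left_le_one_le[of "dist p r" t] by auto
  have h1: "complex_of_real (t * dist p q / dist p q) * B = t * B"
    by (cases "dist p q = 0") (auto simp: B_def)
  have h2: "complex_of_real (t * dist p r / dist p r) * E = t * E"
    using E by (cases "dist p r = 0") auto
  have "dist (c1 (t * dist p q)) (c3 (t * dist p r)) \<le> cmod (t * B - t * E)"
    unfolding h1[symmetric] h2[symmetric] by (rule CMP[OF cat g1 g3 s1 s2 B E BE])
  also have "\<dots> = t * dist q r"
    using BE t by (simp add: right_diff_distrib[symmetric] norm_mult)
  finally show ?thesis .
qed

lemma C2:
  fixes p q r :: "'a::metric_space"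
  assumes cat: "CAT0 TYPE('a)"
    and g1: "geodesic_segment c1 p q" and g3: "geodesic_segment c3 p r"
    and a: "dist p q > 0" and b: "dist p r > 0"
    and s: "0 \<le> s" "s \<le> dist p q" "s \<le> dist p r"
  shows "(dist (c1 s) (c3 s))\<^sup>2 \<le> s\<^sup>2 * ((dist q r)\<^sup>2 - (dist p q - dist p r)\<^sup>2) / (dist p q * dist p r)"
proof -
  obtain x y where xy: "x\<^sup>2 + y\<^sup>2 = (dist p r)\<^sup>2" "(x - dist p q)\<^sup>2 + y\<^sup>2 = (dist q r)\<^sup>2"
     "2 * dist p q * x = (dist p q)\<^sup>2 + (dist p r)\<^sup>2 - (dist q r)\<^sup>2"
    using comp_tri[of p r q] by blast
  define B where "B = complex_of_real (dist p q)"
  define E where "E = Complex x y"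
  have B: "cmod B = dist p q" by (simp add: B_def)
  have E: "cmod E = dist p r" using xy by (simp add: E_def cmod_xy)
  have BE: "cmod (B - E) = dist q r"
  proof -
    have "B - E = Complex (dist p q - x) (- y)" by (simp add: B_def E_def complex_eq_iff)
    then show ?thesis using xy by (simp add: cmod_xy power2_commute)
  qed
  have s1: "s \<in> {0..dist p q}" "s \<in> {0..dist p r}" using s by auto
  have le: "dist (c1 s) (c3 s) \<le> cmod (complex_of_real (s / dist p q) * B - complex_of_real (s / dist p r) * E)"
    using CMP[OF cat g1 g3 s1 B E BE] .
  define a' where "a' = dist p q"
  define b' where "b' = dist p r"
  have eq: "complex_of_real (s / dist p q) * B - complex_of_real (s / dist p r) * E
      = Complex (s - s / b' * x) (- (s / b' * y))"
    using a by (simp add: B_def E_def complex_eq_iff a'_def b'_def)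
  have "(dist (c1 s) (c3 s))\<^sup>2 \<le> (cmod (Complex (s - s / b' * x) (- (s / b' * y))))\<^sup>2"
    using le eq by (simp add: power_mono)
  also have "\<dots> = (s - s / b' * x)\<^sup>2 + (s / b' * y)\<^sup>2" by (simp add: cmod_xy)
  also have "\<dots> = s\<^sup>2 * (2 - 2 * x / b')"
  proof -
    have h: "x\<^sup>2 + y\<^sup>2 = b'\<^sup>2" using xy by (simp add: b'_def)
    have b0: "b' \<noteq> 0" using b by (simp add: b'_def)
    have "(s - s / b' * x)\<^sup>2 + (s / b' * y)\<^sup>2 = s\<^sup>2 - 2 * s\<^sup>2 * x / b' + s\<^sup>2 * (x\<^sup>2 + y\<^sup>2) / b'\<^sup>2"
      using b0 by (simp add: power2_eq_square field_simps)
    also have "\<dots> = s\<^sup>2 * (2 - 2 * x / b')" using b0 unfolding h by (simp add: field_simps power2_eq_square)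
    finally show ?thesis .
  qed
  also have "\<dots> = s\<^sup>2 * ((dist q r)\<^sup>2 - (dist p q - dist p r)\<^sup>2) / (dist p q * dist p r)"
  proof -
    have c2: "(dist q r)\<^sup>2 = a'\<^sup>2 + b'\<^sup>2 - 2 * a' * x" using xy by (simp add: a'_def b'_def)
    have "a' > 0" "b' > 0" using a b by (auto simp: a'_def b'_def)
    then show ?thesis unfolding a'_def[symmetric] b'_def[symmetric] c2
      by (simp add: power2_eq_square field_simps)
  qed
  finally show ?thesis .
qed

lemma CONV:
  fixes p q p' q' :: "'a::metric_space"
  assumes cat: "CAT0 TYPE('a)"
    and g: "geodesic_segment c p q" and g': "geodesic_segment c' p' q'"
    and L: "dist p' q' = dist p q" and s: "0 \<le> s" "s \<le> dist p q"
  shows "dist (c s) (c' s) \<le> (1 - s / dist p q) * dist p p' + (s / dist p q) * dist q q'"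
proof (cases "dist p q = 0")
  case True
  then have "s = 0" using s by auto
  then show ?thesis using g g' True L unfolding geodesic_segment_def by auto
next
  case False
  define l where "l = dist p q"
  have l0: "l > 0" using False by (simp add: l_def)
  define t where "t = s / l"
  have t: "0 \<le> t" "t \<le> 1" using s l0 by (auto simp: t_def l_def)
  have st: "s = t * l" using l0 by (simp add: t_def)
  obtain c'' where g'': "geodesic_segment c'' p q'" using CAT0_geodesic[OF cat] by blast
  define l'' where "l'' = dist p q'"
  have d1: "dist (c (t * l)) (c'' (t * l'')) \<le> t * dist q q'"
    using C1[OF cat g g'' t] by (simp add: l_def l''_def)
  have r'': "geodesic_segment (\<lambda>u. c'' (l'' - u)) q' p" using geodesic_segment_rev[OF g''] by (simp add: l''_def)
  have r': "geodesic_segment (\<lambda>u. c' (l - u)) q' p'" using geodesic_segment_rev[OF g'] L by (simp add: l_def)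
  have t': "0 \<le> 1 - t" "1 - t \<le> 1" using t by auto
  have d2: "dist (c'' (l'' - (1 - t) * l'')) (c' (l - (1 - t) * l)) \<le> (1 - t) * dist p p'"
    using C1[OF cat r'' r' t'] by (simp add: l''_def dist_commute L l_def)
  have e1: "l'' - (1 - t) * l'' = t * l''" "l - (1 - t) * l = t * l" by (auto simp: algebra_simps)
  have "dist (c s) (c' s) \<le> dist (c (t * l)) (c'' (t * l'')) + dist (c'' (t * l'')) (c' (t * l))"
    using st dist_triangle by metis
  also have "\<dots> \<le> t * dist q q' + (1 - t) * dist p p'" using d1 d2 e1 by simp
  finally show ?thesis by (simp add: t_def l_def algebra_simps)
qed




locale geo_act =
  fixes G :: "('g, 'b) monoid_scheme" and \<phi> :: "'g \<Rightarrow> 'a::metric_space \<Rightarrow> 'a"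
  assumes ga: "geometric_action G \<phi>"
begin

lemma gact: "group_action G UNIV \<phi>" using ga unfolding geometric_action_def by auto

lemma grp: "group G"
  using gact unfolding group_action_def group_hom_def by auto

lemma isom: "v \<in> carrier G \<Longrightarrow> dist (\<phi> v x) (\<phi> v y) = dist x y"
  using ga unfolding geometric_action_def by auto

lemma act_mult: "u \<in> carrier G \<Longrightarrow> v \<in> carrier G \<Longrightarrow> \<phi> (u \<otimes>\<^bsub>G\<^esub> v) x = \<phi> u (\<phi> v x)"
  using group_action.composition_rule[OF gact] by auto

lemma act_one: "\<phi> \<one>\<^bsub>G\<^esub> x = x"
  using group_action.id_eq_one[OF gact] by (metis UNIV_I restrict_apply')

lemma act_inv1: "u \<in> carrier G \<Longrightarrow> \<phi> (inv\<^bsub>G\<^esub> u) (\<phi> u x) = x"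
  by (metis act_mult act_one group.inv_closed group.l_inv grp)

lemma act_inv2: "u \<in> carrier G \<Longrightarrow> \<phi> u (\<phi> (inv\<^bsub>G\<^esub> u) x) = x"
  by (metis act_mult act_one group.inv_closed group.r_inv grp)

lemma cocpt: "\<exists>K. compact K \<and> (\<forall>x. \<exists>v\<in>carrier G. \<exists>k\<in>K. x = \<phi> v k)"
proof -
  obtain K where K: "compact K" "(\<Union>v\<in>carrier G. \<phi> v ` K) = UNIV"
    using ga unfolding geometric_action_def by auto
  have "\<forall>x. \<exists>v\<in>carrier G. \<exists>k\<in>K. x = \<phi> v k"
  proof
    fix x
    have "x \<in> (\<Union>v\<in>carrier G. \<phi> v ` K)" using K by auto
    then show "\<exists>v\<in>carrier G. \<exists>k\<in>K. x = \<phi> v k" by auto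
  qed
  then show ?thesis using K by auto
qed

lemma isom_cont: "v \<in> carrier G \<Longrightarrow> continuous_on S (\<phi> v)"
  unfolding continuous_on_iff using isom by metis

lemma step1:
  assumes K: "compact K"
  shows "\<exists>\<rho>>0. \<exists>F0. finite F0 \<and> (\<forall>y\<in>K. \<forall>w\<in>carrier G. dist (\<phi> w y) y < \<rho> \<longrightarrow> w \<in> F0)"
proof -
  have "\<forall>x. \<exists>r>0. finite {v \<in> carrier G. \<phi> v ` ball x r \<inter> ball x r \<noteq> {}}"
    using ga unfolding geometric_action_def by auto
  then obtain r where "\<forall>x. r x > 0 \<and> finite {v \<in> carrier G. \<phi> v ` ball x (r x) \<inter> ball x (r x) \<noteq> {}}"
    using choice[of "\<lambda>x r. r > 0 \<and> finite {v \<in> carrier G. \<phi> v ` ball x r \<inter> ball x r \<noteq> {}}"] by blast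
  then have r: "\<And>x. r x > 0" "\<And>x. finite {v \<in> carrier G. \<phi> v ` ball x (r x) \<inter> ball x (r x) \<noteq> {}}"
    by auto
  have "K \<subseteq> (\<Union>x\<in>K. ball x (r x / 2))" using r(1) by force
  then obtain T where T: "T \<subseteq> K" "finite T" "K \<subseteq> (\<Union>x\<in>T. ball x (r x / 2))"
    using compactE_image[OF K, of K "\<lambda>x. ball x (r x / 2)"] by auto
  show ?thesis
  proof (cases "T = {}")
    case True
    then show ?thesis using T by (intro exI[of _ 1]) auto
  next
    case False
    define \<rho> where "\<rho> = Min ((\<lambda>x. r x / 2) ` T)"
    have \<rho>0: "\<rho> > 0" unfolding \<rho>_def using False T r(1) by auto
    have \<rho>le: "\<And>x. x \<in> T \<Longrightarrow> \<rho> \<le> r x / 2" unfolding \<rho>_def using T(2) by (intro Min_le) auto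
    define F0 where "F0 = (\<Union>x\<in>T. {v \<in> carrier G. \<phi> v ` ball x (r x) \<inter> ball x (r x) \<noteq> {}})"
    have "finite F0" unfolding F0_def using T r(2) by auto
    moreover have "\<forall>y\<in>K. \<forall>w\<in>carrier G. dist (\<phi> w y) y < \<rho> \<longrightarrow> w \<in> F0"
    proof (intro ballI impI)
      fix y w assume y: "y \<in> K" and w: "w \<in> carrier G" and d: "dist (\<phi> w y) y < \<rho>"
      obtain x where x: "x \<in> T" "dist x y < r x / 2" using T y by auto
      have "dist x (\<phi> w y) < r x" using dist_triangle[of x "\<phi> w y" y] x d \<rho>le[OF x(1)]
        by (simp add: dist_commute)
      moreover have "dist x y < r x" using x r(1)[of x] by linarith
      ultimately have "\<phi> w y \<in> \<phi> w ` ball x (r x) \<inter> ball x (r x)" by auto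
      then show "w \<in> F0" unfolding F0_def using x w by blast
    qed
    ultimately show ?thesis using \<rho>0 by blast
  qed
qed

lemma FIN:
  assumes K: "compact K"
  shows "\<exists>\<eta>>0. finite {u \<in> carrier G. \<exists>k\<in>K. \<exists>k'\<in>K. dist k (\<phi> u k') < \<eta>}"
proof -
  obtain \<rho> F0 where \<rho>: "\<rho> > 0" "finite F0" "\<forall>y\<in>K. \<forall>w\<in>carrier G. dist (\<phi> w y) y < \<rho> \<longrightarrow> w \<in> F0"
    using step1[OF K] by blast
  define \<eta> where "\<eta> = \<rho> / 6"
  have \<eta>0: "\<eta> > 0" using \<rho> by (simp add: \<eta>_def)
  have "K \<subseteq> (\<Union>x\<in>K. ball x \<eta>)" using \<eta>0 by force
  then obtain Z where Z: "Z \<subseteq> K" "finite Z" "K \<subseteq> (\<Union>x\<in>Z. ball x \<eta>)"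
    using compactE_image[OF K, of K "\<lambda>x. ball x \<eta>"] by auto
  define U where "U z z' = {u \<in> carrier G. dist z (\<phi> u z') < 3 * \<eta>}" for z z'
  have finU: "finite (U z z')" if "z' \<in> K" for z z'
  proof (cases "U z z' = {}")
    case False
    then obtain u0 where u0: "u0 \<in> U z z'" by blast
    have "U z z' \<subseteq> (\<lambda>w. u0 \<otimes>\<^bsub>G\<^esub> w) ` F0"
    proof
      fix u assume u: "u \<in> U z z'"
      have uc: "u \<in> carrier G" and u0c: "u0 \<in> carrier G" using u u0 by (auto simp: U_def)
      have "dist (\<phi> u z') (\<phi> u0 z') < 6 * \<eta>"
        using u u0 dist_triangle[of "\<phi> u z'" "\<phi> u0 z'" z] unfolding U_def by (simp add: dist_commute)
      then have "dist (\<phi> (inv\<^bsub>G\<^esub> u0 \<otimes>\<^bsub>G\<^esub> u) z') z' < \<rho>"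
        using isom[of "inv\<^bsub>G\<^esub> u0" "\<phi> u z'" "\<phi> u0 z'"] act_inv1[OF u0c] act_mult uc u0c grp
        by (simp add: \<eta>_def group.inv_closed)
      then have "inv\<^bsub>G\<^esub> u0 \<otimes>\<^bsub>G\<^esub> u \<in> F0" using \<rho>(3) that uc u0c grp
        by (meson group.inv_closed monoid.m_closed group.is_monoid)
      moreover have "u = u0 \<otimes>\<^bsub>G\<^esub> (inv\<^bsub>G\<^esub> u0 \<otimes>\<^bsub>G\<^esub> u)"
      proof -
        interpret G: group G by (rule grp)
        show ?thesis using uc u0c by (simp add: G.m_assoc[symmetric])
      qed
      ultimately show "u \<in> (\<lambda>w. u0 \<otimes>\<^bsub>G\<^esub> w) ` F0" by blast
    qed
    then show ?thesis using \<rho>(2) by (meson finite_imageI finite_subset)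
  qed simp
  have "{u \<in> carrier G. \<exists>k\<in>K. \<exists>k'\<in>K. dist k (\<phi> u k') < \<eta>} \<subseteq> (\<Union>z\<in>Z. \<Union>z'\<in>Z. U z z')"
  proof
    fix u assume "u \<in> {u \<in> carrier G. \<exists>k\<in>K. \<exists>k'\<in>K. dist k (\<phi> u k') < \<eta>}"
    then obtain k k' where u: "u \<in> carrier G" "k \<in> K" "k' \<in> K" "dist k (\<phi> u k') < \<eta>" by auto
    obtain z where z1: "z \<in> Z" "dist z k < \<eta>" using Z(3) u(2) by auto
    obtain z' where z2: "z' \<in> Z" "dist z' k' < \<eta>" using Z(3) u(3) by auto
    note z = z1 z2
    have "dist (\<phi> u k') (\<phi> u z') < \<eta>" using isom[OF u(1), of k' z'] z(4) dist_commute[of k' z'] by linarith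
    then have "dist z (\<phi> u z') < 3 * \<eta>"
      using dist_triangle[of z "\<phi> u k'" k] dist_triangle[of z "\<phi> u z'" "\<phi> u k'"] z(2) u(4) by linarith
    then show "u \<in> (\<Union>z\<in>Z. \<Union>z'\<in>Z. U z z')" using z u unfolding U_def by auto
  qed
  moreover have "finite (\<Union>z\<in>Z. \<Union>z'\<in>Z. U z z')" using Z finU by auto
  ultimately show ?thesis using \<eta>0 finite_subset by blast
qed

lemma complete_X:
  assumes "Cauchy (y :: nat \<Rightarrow> 'a)"
  shows "convergent y"
proof -
  obtain K where K: "compact K" "\<forall>x. \<exists>v\<in>carrier G. \<exists>k\<in>K. x = \<phi> v k" using cocpt by blast
  obtain \<eta> where \<eta>: "\<eta> > 0" "finite {u \<in> carrier G. \<exists>k\<in>K. \<exists>k'\<in>K. dist k (\<phi> u k') < \<eta>}"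
    using FIN[OF K(1)] by blast
  define W where "W = {u \<in> carrier G. \<exists>k\<in>K. \<exists>k'\<in>K. dist k (\<phi> u k') < \<eta>}"
  obtain N where N: "\<And>m n. m \<ge> N \<Longrightarrow> n \<ge> N \<Longrightarrow> dist (y m) (y n) < \<eta>"
    using assms \<eta>(1) unfolding Cauchy_def by blast
  obtain h k where hk: "h \<in> carrier G" "k \<in> K" "y N = \<phi> h k" using K by blast
  define z where "z n = \<phi> (inv\<^bsub>G\<^esub> h) (y (n + N))" for n
  define S where "S = (\<Union>u\<in>W. \<phi> u ` K)"
  have cS: "compact S" unfolding S_def
  proof (rule compact_UN)
    show "finite W" using \<eta>(2) by (simp add: W_def)
    fix u assume "u \<in> W"
    then have "u \<in> carrier G" by (simp add: W_def)
    then show "compact (\<phi> u ` K)" using K(1) isom_cont by (intro compact_continuous_image) auto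
  qed
  have zS: "z n \<in> S" for n
  proof -
    obtain u k' where uk: "u \<in> carrier G" "k' \<in> K" "z n = \<phi> u k'" using K by blast
    have "dist k (z n) = dist (y N) (y (n + N))"
      unfolding z_def hk(3) using isom[of h k "\<phi> (inv\<^bsub>G\<^esub> h) (y (n + N))"] act_inv2[OF hk(1)] hk(1) by simp
    then have "dist k (\<phi> u k') < \<eta>" using N[of N "n + N"] uk by simp
    then have "u \<in> W" unfolding W_def using uk hk by auto
    then show ?thesis unfolding S_def using uk by auto
  qed
  have "Cauchy z"
    unfolding Cauchy_def
  proof (intro allI impI)
    fix e :: real assume "e > 0"
    then obtain M where M: "\<forall>m\<ge>M. \<forall>n\<ge>M. dist (y m) (y n) < e" using assms unfolding Cauchy_def by blast
    have hi: "inv\<^bsub>G\<^esub> h \<in> carrier G" using hk(1) grp by (simp add: group.inv_closed)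
    have "dist (z m) (z n) = dist (y (m + N)) (y (n + N))" for m n
      unfolding z_def by (rule isom[OF hi])
    then show "\<exists>M. \<forall>m\<ge>M. \<forall>n\<ge>M. dist (z m) (z n) < e"
      using M by (intro exI[of _ M]) auto
  qed
  then obtain l where l: "z \<longlonglongrightarrow> l" using compact_imp_complete[OF cS] zS unfolding complete_def by blast
  have "(\<lambda>n. y (n + N)) \<longlonglongrightarrow> \<phi> h l"
  proof -
    have yz: "y (n + N) = \<phi> h (z n)" for n unfolding z_def act_inv2[OF hk(1)] ..
    have eq: "(\<lambda>n. dist (y (n + N)) (\<phi> h l)) = (\<lambda>n. dist (z n) l)"
      unfolding yz isom[OF hk(1)] ..
    have "(\<lambda>n. dist (z n) l) \<longlonglongrightarrow> 0" using l tendsto_dist_iff by blast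
    then show ?thesis using tendsto_dist_iff[of "\<lambda>n. y (n + N)"] eq by simp
  qed
  then have "y \<longlonglongrightarrow> \<phi> h l" by (rule LIMSEQ_offset)
  then show ?thesis by (rule convergentI)
qed

end



lemma ray_seg:
  assumes "geodesic_ray c" "0 \<le> T"
  shows "geodesic_segment c (c 0) (c T)"
proof -
  have d: "dist (c 0) (c T) = T" using assms unfolding geodesic_ray_def by auto
  show ?thesis unfolding geodesic_segment_def d using assms unfolding geodesic_ray_def by auto
qed

lemma alg_bound:
  fixes a b c e M :: real
  assumes "a > 0" "b > 0" "\<bar>a - b\<bar> \<le> c" "c \<le> a + b" "c \<le> \<bar>a - b\<bar> + e" "e \<ge> 0" "M > 0" "M \<le> a" "M \<le> b"
  shows "(c\<^sup>2 - (a - b)\<^sup>2) / (a * b) \<le> 2 * e / M"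
proof -
  define mx where "mx = max a b"
  have mx0: "mx > 0" using assms by (simp add: mx_def)
  have "c\<^sup>2 - (a - b)\<^sup>2 = (c - \<bar>a - b\<bar>) * (c + \<bar>a - b\<bar>)"
    by (simp add: power2_eq_square algebra_simps)
  also have "\<dots> \<le> e * (2 * mx)"
  proof (rule mult_mono)
    show "c - \<bar>a - b\<bar> \<le> e" using assms by linarith
    show "c + \<bar>a - b\<bar> \<le> 2 * mx" using assms unfolding mx_def by (auto simp: abs_if max_def)
    show "0 \<le> e" using assms by simp
    show "0 \<le> c + \<bar>a - b\<bar>" using assms by linarith
  qed
  finally have num: "c\<^sup>2 - (a - b)\<^sup>2 \<le> e * (2 * mx)" .
  have den: "M * mx \<le> a * b"
    using assms unfolding mx_def by (auto simp: max_def intro: mult_mono mult_mono')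
  have "(c\<^sup>2 - (a - b)\<^sup>2) / (a * b) \<le> e * (2 * mx) / (a * b)"
    using num assms by (simp add: divide_right_mono)
  also have "\<dots> \<le> e * (2 * mx) / (M * mx)"
    using den assms mx0 by (intro divide_left_mono) auto
  also have "\<dots> = 2 * e / M" using mx0 by simp
  finally show ?thesis .
qed

lemma ray_exists:
  fixes x0 :: "'a::metric_space"
  assumes cat: "CAT0 TYPE('a)"
    and compl: "\<And>y::nat \<Rightarrow> 'a. Cauchy y \<Longrightarrow> convergent y"
    and ray: "geodesic_ray c'"
  shows "\<exists>c. geodesic_ray c \<and> c 0 = x0 \<and> asymptotic c' c"
proof -
  define p where "p = c' 0"
  define d0 where "d0 = dist x0 p"
  have d0: "d0 \<ge> 0" by (simp add: d0_def)
  define L where "L n = dist x0 (c' (real n))" for n :: nat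
  have dpn: "dist p (c' t) = t" if "t \<ge> 0" for t
    using ray that unfolding geodesic_ray_def p_def by auto
  have Lb: "\<bar>L n - real n\<bar> \<le> d0" for n
  proof -
    have "L n \<le> d0 + real n" using dist_triangle[of x0 "c' (real n)" p] dpn[of "real n"]
      by (simp add: L_def d0_def)
    moreover have "real n \<le> L n + d0" using dist_triangle[of p "c' (real n)" x0] dpn[of "real n"]
      by (simp add: L_def d0_def dist_commute)
    ultimately show ?thesis by linarith
  qed
  define \<sigma> where "\<sigma> n = (SOME \<gamma>. geodesic_segment \<gamma> x0 (c' (real n)))" for n :: nat
  have \<sigma>: "geodesic_segment (\<sigma> n) x0 (c' (real n))" for n
    unfolding \<sigma>_def using CAT0_geodesic[OF cat] by (rule someI_ex)
  have \<sigma>d: "dist (\<sigma> n s) (\<sigma> n t) = \<bar>s - t\<bar>" if "0 \<le> s" "s \<le> L n" "0 \<le> t" "t \<le> L n" for n s t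
    using geodesic_segment_dist[OF \<sigma>[of n]] that by (simp add: L_def)
  have \<sigma>0: "\<sigma> n 0 = x0" for n using \<sigma>[of n] unfolding geodesic_segment_def by auto
  have cau: "Cauchy (\<lambda>n. \<sigma> n s)" if s: "s \<ge> 0" for s
    unfolding Cauchy_def
  proof (intro allI impI)
    fix \<epsilon> :: real assume \<epsilon>: "\<epsilon> > 0"
    obtain N :: nat where N: "real N \<ge> d0 + s + 1 + 4 * s\<^sup>2 * d0 / \<epsilon>\<^sup>2" using real_arch_simple by blast
    define M where "M = real N - d0"
    have "4 * s\<^sup>2 * d0 / \<epsilon>\<^sup>2 \<ge> 0" using d0 by simp
    then have M1: "M \<ge> 1" "M \<ge> s" using N s d0 unfolding M_def by linarith+
    have "4 * s\<^sup>2 * d0 / \<epsilon>\<^sup>2 < M" using N M_def s by linarith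
    then have Me: "4 * s\<^sup>2 * d0 / M < \<epsilon>\<^sup>2" using M1 \<epsilon> by (simp add: field_simps)
    show "\<exists>N. \<forall>m\<ge>N. \<forall>n\<ge>N. dist (\<sigma> m s) (\<sigma> n s) < \<epsilon>"
    proof (intro exI[of _ N] allI impI)
      fix m n assume mn: "N \<le> m" "N \<le> n"
      have LM: "M \<le> L m" "M \<le> L n" using Lb[of m] Lb[of n] mn unfolding M_def by auto
      have a0: "dist x0 (c' (real m)) > 0" "dist x0 (c' (real n)) > 0" using LM M1 by (auto simp: L_def)
      have "(dist (\<sigma> m s) (\<sigma> n s))\<^sup>2 \<le> s\<^sup>2 * ((dist (c' (real m)) (c' (real n)))\<^sup>2 - (L m - L n)\<^sup>2) / (L m * L n)"
        using C2[OF cat \<sigma>[of m] \<sigma>[of n] a0] s LM M1 by (simp add: L_def)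
      also have "\<dots> \<le> s\<^sup>2 * (2 * (2 * d0) / M)"
      proof -
        have dmn: "dist (c' (real m)) (c' (real n)) = \<bar>real m - real n\<bar>"
          using ray unfolding geodesic_ray_def by auto
        have "((dist (c' (real m)) (c' (real n)))\<^sup>2 - (L m - L n)\<^sup>2) / (L m * L n) \<le> 2 * (2 * d0) / M"
        proof (rule alg_bound)
          show "L m > 0" "L n > 0" using LM M1 by auto
          show "\<bar>L m - L n\<bar> \<le> dist (c' (real m)) (c' (real n))"
            unfolding L_def by (metis dist_commute dist_triangle3 abs_diff_le_iff dist_triangle2 diff_le_eq)
          show "dist (c' (real m)) (c' (real n)) \<le> L m + L n"
            unfolding L_def by (metis dist_commute dist_triangle)
          show "dist (c' (real m)) (c' (real n)) \<le> \<bar>L m - L n\<bar> + 2 * d0"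
            unfolding dmn using Lb[of m] Lb[of n] by linarith
          show "0 \<le> 2 * d0" "0 < M" "M \<le> L m" "M \<le> L n" using d0 M1 LM by auto
        qed
        then have "s\<^sup>2 * (((dist (c' (real m)) (c' (real n)))\<^sup>2 - (L m - L n)\<^sup>2) / (L m * L n)) \<le> s\<^sup>2 * (2 * (2 * d0) / M)"
          by (rule mult_left_mono) simp
        then show ?thesis by simp
      qed
      also have "\<dots> = 4 * s\<^sup>2 * d0 / M" by simp
      also have "\<dots> < \<epsilon>\<^sup>2" by (rule Me)
      finally have "(dist (\<sigma> m s) (\<sigma> n s))\<^sup>2 < \<epsilon>\<^sup>2" .
      then show "dist (\<sigma> m s) (\<sigma> n s) < \<epsilon>" using \<epsilon> by (simp add: power_less_imp_less_base)
    qed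
  qed
  define c where "c s = lim (\<lambda>n. \<sigma> n s)" for s
  have lim: "(\<lambda>n. \<sigma> n s) \<longlonglongrightarrow> c s" if "s \<ge> 0" for s
    unfolding c_def using compl[OF cau[OF that]] by (simp add: convergent_LIMSEQ_iff)
  have ev: "eventually (\<lambda>n. T \<le> L n) sequentially" for T
  proof -
    obtain N :: nat where "real N \<ge> T + d0" using real_arch_simple by blast
    then show ?thesis unfolding eventually_sequentially using Lb
      by (intro exI[of _ N]) (smt (verit) of_nat_le_iff)
  qed
  have c0: "c 0 = x0" using lim[of 0] \<sigma>0 by (simp add: LIMSEQ_unique)
  have gr: "geodesic_ray c" unfolding geodesic_ray_def
  proof (intro allI impI)
    fix s t :: real assume st: "0 \<le> s" "0 \<le> t"
    have t1: "(\<lambda>n. dist (\<sigma> n s) (\<sigma> n t)) \<longlonglongrightarrow> dist (c s) (c t)"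
      using lim st by (intro tendsto_dist) auto
    have "eventually (\<lambda>n. dist (\<sigma> n s) (\<sigma> n t) = \<bar>s - t\<bar>) sequentially"
      using ev[of "s + t"]
    proof eventually_elim
      case (elim n)
      then show ?case using st by (intro \<sigma>d) auto
    qed
    then have "(\<lambda>n. dist (\<sigma> n s) (\<sigma> n t)) \<longlonglongrightarrow> \<bar>s - t\<bar>"
      by (rule tendsto_eventually)
    then show "dist (c s) (c t) = \<bar>s - t\<bar>" using t1 LIMSEQ_unique by blast
  qed
  have bnd: "dist (c' t) (\<sigma> n t) \<le> 2 * d0" if t: "t \<ge> 0" and n: "real n \<ge> t + d0 + 1" for t n
  proof -
    have n0: "real n > 0" using n t d0 by linarith
    define \<tau> where "\<tau> = 1 - t / real n"
    have \<tau>: "0 \<le> \<tau>" "\<tau> \<le> 1" using n0 n t d0 by (auto simp: \<tau>_def field_simps)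
    have r1: "geodesic_segment (\<lambda>u. \<sigma> n (dist x0 (c' (real n)) - u)) (c' (real n)) x0"
      by (rule geodesic_segment_rev[OF \<sigma>[of n]])
    have seg': "geodesic_segment c' p (c' (real n))" using ray_seg[OF ray, of "real n"] by (simp add: p_def)
    have r2: "geodesic_segment (\<lambda>u. c' (dist p (c' (real n)) - u)) (c' (real n)) p"
      by (rule geodesic_segment_rev[OF seg'])
    have cc: "dist ((\<lambda>u. \<sigma> n (dist x0 (c' (real n)) - u)) (\<tau> * dist (c' (real n)) x0))
               ((\<lambda>u. c' (dist p (c' (real n)) - u)) (\<tau> * dist (c' (real n)) p)) \<le> \<tau> * dist x0 p"
      by (rule C1[OF cat r1 r2 \<tau>])
    have e1: "dist x0 (c' (real n)) - \<tau> * dist (c' (real n)) x0 = t * L n / real n"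
      using n0 by (simp add: L_def dist_commute \<tau>_def field_simps)
    have e2: "dist p (c' (real n)) - \<tau> * dist (c' (real n)) p = t"
      using n0 dpn[of "real n"] by (simp add: dist_commute \<tau>_def field_simps)
    have A: "dist (\<sigma> n (t * L n / real n)) (c' t) \<le> d0"
    proof -
      have "dist (\<sigma> n (t * L n / real n)) (c' t) \<le> \<tau> * d0" using cc e1 e2 by (simp add: d0_def)
      also have "\<dots> \<le> d0" using \<tau> d0 by (simp add: mult_left_le_one_le)
      finally show ?thesis .
    qed
    have Ln: "L n \<ge> t" using Lb[of n] n by linarith
    have L0: "L n \<ge> 0" by (simp add: L_def)
    have tn: "t \<le> real n" using n d0 by linarith
    have tl: "t * L n / real n \<le> L n"
      using n0 mult_right_mono[OF tn L0] by (simp add: field_simps mult.commute)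
    have tl0: "0 \<le> t * L n / real n" using n0 t L0 by simp
    have B: "dist (\<sigma> n t) (\<sigma> n (t * L n / real n)) \<le> d0"
    proof -
      have "dist (\<sigma> n t) (\<sigma> n (t * L n / real n)) = \<bar>t - t * L n / real n\<bar>"
        using \<sigma>d[of t n "t * L n / real n"] t Ln tl tl0 by simp
      also have "\<dots> = t * \<bar>real n - L n\<bar> / real n"
      proof -
        have "t - t * L n / real n = t * (real n - L n) / real n" using n0 by (simp add: field_simps)
        then show ?thesis using n0 t by (simp add: abs_mult)
      qed
      also have "\<dots> \<le> t * d0 / real n"
      proof (rule divide_right_mono)
        show "t * \<bar>real n - L n\<bar> \<le> t * d0" using Lb[of n] t by (intro mult_left_mono) (auto simp: abs_minus_commute)
      qed (use n0 in simp)
      also have "\<dots> \<le> d0"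
      proof -
        have "t * d0 \<le> real n * d0" using tn d0 by (rule mult_right_mono)
        then show ?thesis using n0 by (simp add: field_simps)
      qed
      finally show ?thesis .
    qed
    show ?thesis using A B dist_triangle[of "c' t" "\<sigma> n t" "\<sigma> n (t * L n / real n)"]
      by (simp add: dist_commute)
  qed
  have asym: "asymptotic c' c" unfolding asymptotic_def
  proof (intro exI[of _ "2 * d0"] allI impI)
    fix t :: real assume t: "t \<ge> 0"
    have "(\<lambda>n. dist (c' t) (\<sigma> n t)) \<longlonglongrightarrow> dist (c' t) (c t)"
      using lim[OF t] by (intro tendsto_dist tendsto_const)
    moreover have "eventually (\<lambda>n. dist (c' t) (\<sigma> n t) \<le> 2 * d0) sequentially"
    proof -
      obtain N :: nat where "real N \<ge> t + d0 + 1" using real_arch_simple by blast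
      then show ?thesis unfolding eventually_sequentially
        using bnd[OF t] by (intro exI[of _ N]) (smt (verit) of_nat_le_iff)
    qed
    ultimately show "dist (c' t) (c t) \<le> 2 * d0" by (rule tendsto_upperbound) simp
  qed
  show ?thesis using gr c0 asym by blast
qed




fun prods :: "('g, 'b) monoid_scheme \<Rightarrow> 'g set \<Rightarrow> nat \<Rightarrow> 'g set" where
  "prods G W 0 = {\<one>\<^bsub>G\<^esub>}"
| "prods G W (Suc n) = (\<lambda>(a, b). a \<otimes>\<^bsub>G\<^esub> b) ` (prods G W n \<times> W)"

lemma finite_prods: "finite W \<Longrightarrow> finite (prods G W n)"
  by (induction n) auto


lemma asym_refl: "asymptotic c c"
  unfolding asymptotic_def by (intro exI[of _ 0]) auto

lemma asym_sym: "asymptotic a b \<Longrightarrow> asymptotic b a"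
  unfolding asymptotic_def by (simp add: dist_commute)

lemma asym_trans: "asymptotic a b \<Longrightarrow> asymptotic b c \<Longrightarrow> asymptotic a c"
  unfolding asymptotic_def
proof -
  assume "\<exists>B. \<forall>t\<ge>0. dist (a t) (b t) \<le> B" "\<exists>B. \<forall>t\<ge>0. dist (b t) (c t) \<le> B"
  then obtain B1 B2 where "\<forall>t\<ge>0. dist (a t) (b t) \<le> B1" "\<forall>t\<ge>0. dist (b t) (c t) \<le> B2" by blast
  then have "\<forall>t\<ge>0. dist (a t) (c t) \<le> B1 + B2"
    by (smt (verit, best) dist_triangle)
  then show "\<exists>B. \<forall>t\<ge>0. dist (a t) (c t) \<le> B" by blast
qed

lemma asym_comp:
  assumes "\<And>x y. dist (h x) (h y) = dist x y" "asymptotic a b"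
  shows "asymptotic (h \<circ> a) (h \<circ> b)"
  using assms unfolding asymptotic_def by simp

lemma ray_comp:
  assumes "\<And>x y. dist (h x) (h y) = dist x y" "geodesic_ray c"
  shows "geodesic_ray (h \<circ> c)"
  using assms unfolding geodesic_ray_def by simp

lemma seg_comp:
  assumes "\<And>x y. dist (h x) (h y) = dist x y" "geodesic_segment c x y"
  shows "geodesic_segment (h \<circ> c) (h x) (h y)"
  using assms unfolding geodesic_segment_def by simp

lemma ray_class_eq:
  assumes "asymptotic a b"
  shows "ray_class a = ray_class b"
  unfolding ray_class_def using assms asym_sym asym_trans by blast

lemma cone_bounded:
  fixes x0 :: "'a::metric_space"
  assumes cat: "CAT0 TYPE('a)" and ray: "geodesic_ray c" and c0: "c 0 = x0"
    and RR: "\<forall>t\<ge>0. \<exists>y\<in>S. dist (c t) y \<le> R"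
  shows "\<forall>r>0. \<forall>\<epsilon>>0. \<exists>x\<in>S. dist x0 x > r \<and> (\<exists>cx. geodesic_segment cx x0 x \<and> dist (cx r) (c r) < \<epsilon>)"
proof (intro allI impI)
  fix r \<epsilon> :: real assume r: "r > 0" and e: "\<epsilon> > 0"
  have R0: "R \<ge> 0" using RR by (meson order_trans zero_le_dist order_refl)
  define n where "n = r + 2 * R + 2 * r * R / \<epsilon> + 1"
  have rR: "2 * r * R / \<epsilon> \<ge> 0" using r R0 e by simp
  have n: "n > r + 2 * R" "n > 0" "n \<ge> r" using rR r R0 by (auto simp: n_def)
  have n2: "2 * r * R < \<epsilon> * n"
  proof -
    have "2 * r * R / \<epsilon> < n" using r R0 unfolding n_def by linarith
    then show ?thesis using e by (simp add: field_simps)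
  qed
  have "n \<ge> 0" using n by simp
  then obtain y where y: "y \<in> S" "dist (c n) y \<le> R" using RR by blast
  have dn: "dist x0 (c n) = n" using ray n c0 unfolding geodesic_ray_def by auto
  define m where "m = dist x0 y"
  have m: "\<bar>m - n\<bar> \<le> R" using dist_triangle[of x0 y "c n"] dist_triangle[of x0 "c n" y] y dn
    unfolding m_def by (simp add: dist_commute abs_le_iff)
  have mr: "m > r" using m n by linarith
  obtain cx where cx: "geodesic_segment cx x0 y" using CAT0_geodesic[OF cat] by blast
  have seg: "geodesic_segment c x0 (c n)" using ray_seg[OF ray, of n] n c0 by simp
  define t where "t = r / n"
  have t: "0 \<le> t" "t \<le> 1" using n r by (auto simp: t_def)
  have tn: "t * n = r" using n by (simp add: t_def)
  have A: "dist (c r) (cx (t * m)) \<le> t * R"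
  proof -
    have "dist (c (t * n)) (cx (t * m)) \<le> t * dist (c n) y"
      using C1[OF cat seg cx t] by (simp add: dn m_def)
    also have "\<dots> \<le> t * R" using y t by (simp add: mult_left_mono)
    finally show ?thesis using tn by simp
  qed
  have B: "dist (cx r) (cx (t * m)) \<le> t * R"
  proof -
    have p1: "r \<in> {0..dist x0 y}" using mr r by (auto simp: m_def)
    have "t * m \<le> m" using t mr r by (simp add: mult_left_le_one_le)
    then have p2: "t * m \<in> {0..dist x0 y}" using t mr r by (auto simp: m_def)
    have "dist (cx r) (cx (t * m)) = \<bar>r - t * m\<bar>" by (rule geodesic_segment_dist[OF cx p1 p2])
    also have "\<dots> = t * \<bar>n - m\<bar>" using tn t by (metis abs_mult abs_of_nonneg right_diff_distrib)
    also have "\<dots> \<le> t * R" using m t by (simp add: abs_minus_commute mult_left_mono)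
    finally show ?thesis .
  qed
  have "dist (cx r) (c r) \<le> 2 * t * R" using A B dist_triangle[of "cx r" "c r" "cx (t * m)"]
    by (simp add: dist_commute)
  also have "\<dots> < \<epsilon>" using n2 n by (simp add: t_def field_simps)
  finally have "dist (cx r) (c r) < \<epsilon>" .
  then show "\<exists>x\<in>S. dist x0 x > r \<and> (\<exists>cx. geodesic_segment cx x0 x \<and> dist (cx r) (c r) < \<epsilon>)"
    using y(1) mr cx unfolding m_def by blast
qed

lemma noninc:
  fixes h :: "'a::metric_space \<Rightarrow> 'a"
  assumes cat: "CAT0 TYPE('a)" and ray: "geodesic_ray c" and iso: "\<And>x y. dist (h x) (h y) = dist x y"
    and Bd: "\<forall>t\<ge>0. dist (c t) (h (c t)) \<le> B" and t: "t \<ge> 0"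
  shows "dist (c t) (h (c t)) \<le> dist (c 0) (h (c 0))"
proof (rule ccontr)
  define D where "D = dist (c 0) (h (c 0))"
  assume "\<not> ?thesis"
  then have \<delta>: "dist (c t) (h (c t)) - D > 0" by (simp add: D_def)
  define \<delta> where "\<delta> = dist (c t) (h (c t)) - D"
  define T where "T = t + 1 + t * \<bar>B - D\<bar> / \<delta>"
  have q: "t * \<bar>B - D\<bar> / \<delta> \<ge> 0" using \<delta> t by (simp add: \<delta>_def)
  have T: "T > 0" "T \<ge> t" using q t by (auto simp: T_def)
  have Tq: "t * \<bar>B - D\<bar> < \<delta> * T"
  proof -
    have "t * \<bar>B - D\<bar> / \<delta> < T" using t unfolding T_def by linarith
    then show ?thesis using \<delta> by (simp add: \<delta>_def field_simps)
  qed
  have s1: "geodesic_segment c (c 0) (c T)" by (rule ray_seg[OF ray]) (use T in simp)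
  have s2: "geodesic_segment (h \<circ> c) (h (c 0)) (h (c T))" by (rule seg_comp[OF iso s1])
  have dT: "dist (c 0) (c T) = T" using ray T unfolding geodesic_ray_def by auto
  have "dist (c t) ((h \<circ> c) t) \<le> (1 - t / T) * D + (t / T) * dist (c T) (h (c T))"
    using CONV[OF cat s1 s2] iso dT T t by (simp add: D_def)
  also have "\<dots> \<le> (1 - t / T) * D + (t / T) * B"
    using Bd T t by (intro add_left_mono mult_left_mono) auto
  also have "\<dots> = D + t * (B - D) / T" using T by (simp add: field_simps)
  also have "\<dots> \<le> D + t * \<bar>B - D\<bar> / T" using t T by (simp add: divide_right_mono mult_left_mono)
  also have "\<dots> < D + \<delta>" using Tq T by (simp add: field_simps)
  finally show False by (simp add: \<delta>_def)
qed

locale geo_cat = geo_act G \<phi> for G :: "('g, 'b) monoid_scheme" and \<phi> :: "'g \<Rightarrow> 'a::metric_space \<Rightarrow> 'a" +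
  assumes cat: "CAT0 TYPE('a)"
begin

lemma S_finite:
  assumes K: "compact K" and cov: "\<forall>x. \<exists>v\<in>carrier G. \<exists>k\<in>K. x = \<phi> v k" and D: "D \<ge> 0"
  shows "finite {v \<in> carrier G. \<exists>k\<in>K. dist k (\<phi> v k) \<le> D}"
proof -
  interpret G: group G by (rule grp)
  obtain \<eta> where \<eta>: "\<eta> > 0" "finite {u \<in> carrier G. \<exists>k\<in>K. \<exists>k'\<in>K. dist k (\<phi> u k') < \<eta>}"
    using FIN[OF K] by blast
  define W where "W = {u \<in> carrier G. \<exists>k\<in>K. \<exists>k'\<in>K. dist k (\<phi> u k') < \<eta>}"
  obtain wf kf where wk: "\<And>x. wf x \<in> carrier G" "\<And>x. kf x \<in> K" "\<And>x. x = \<phi> (wf x) (kf x)"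
    using cov by metis
  define N :: nat where "N = nat \<lceil>D / \<eta>\<rceil> + 1"
  have N0: "N > 0" by (simp add: N_def)
  have DN: "D / real N < \<eta>"
  proof -
    have "D / \<eta> < real N" unfolding N_def by linarith
    then have "D < \<eta> * real N" using \<eta>(1) by (simp add: field_simps)
    then show ?thesis using N0 by (simp add: field_simps)
  qed
  have "{v \<in> carrier G. \<exists>k\<in>K. dist k (\<phi> v k) \<le> D} \<subseteq> prods G W N"
  proof
    fix v assume "v \<in> {v \<in> carrier G. \<exists>k\<in>K. dist k (\<phi> v k) \<le> D}"
    then obtain k where v: "v \<in> carrier G" "k \<in> K" "dist k (\<phi> v k) \<le> D" by blast
    obtain \<gamma> where \<gamma>: "geodesic_segment \<gamma> k (\<phi> v k)" using CAT0_geodesic[OF cat] by blast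
    define D' where "D' = dist k (\<phi> v k)"
    define pt where "pt j = \<gamma> (real j * D' / real N)" for j :: nat
    define w where "w j = (if j = 0 then \<one>\<^bsub>G\<^esub> else if j = N then v else wf (pt j))" for j
    define kk where "kk j = (if j = 0 then k else if j = N then k else kf (pt j))" for j
    have rep: "pt j = \<phi> (w j) (kk j) \<and> w j \<in> carrier G \<and> kk j \<in> K" if "j \<le> N" for j
    proof -
      have "pt 0 = k" using \<gamma> unfolding pt_def geodesic_segment_def by simp
      moreover have "pt N = \<phi> v k" using \<gamma> N0 unfolding pt_def geodesic_segment_def D'_def by simp
      ultimately show ?thesis using wk v N0 unfolding w_def kk_def by (auto simp: act_one)
    qed
    have step: "inv\<^bsub>G\<^esub> (w j) \<otimes>\<^bsub>G\<^esub> w (Suc j) \<in> W" if "j < N" for j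
    proof -
      have r1: "pt j = \<phi> (w j) (kk j)" "w j \<in> carrier G" "kk j \<in> K" using rep[of j] that by auto
      have r2: "pt (Suc j) = \<phi> (w (Suc j)) (kk (Suc j))" "w (Suc j) \<in> carrier G" "kk (Suc j) \<in> K"
        using rep[of "Suc j"] that by auto
      define u where "u = inv\<^bsub>G\<^esub> (w j) \<otimes>\<^bsub>G\<^esub> w (Suc j)"
      have uc: "u \<in> carrier G" using r1 r2 by (simp add: u_def)
      have "dist (pt j) (pt (Suc j)) = D' / real N"
      proof -
        have D'0: "D' \<ge> 0" by (simp add: D'_def)
        have a: "real j * D' / real N \<in> {0..dist k (\<phi> v k)}" "real (Suc j) * D' / real N \<in> {0..dist k (\<phi> v k)}"
        proof -
          have jN: "real j \<le> real N" "real (Suc j) \<le> real N" using that by auto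
          have m1: "real j * D' \<le> real N * D'" by (rule mult_right_mono[OF jN(1) D'0])
          have m2: "real (Suc j) * D' \<le> real N * D'" by (rule mult_right_mono[OF jN(2) D'0])
          have "real j * D' / real N \<le> D'" "real (Suc j) * D' / real N \<le> D'"
            using m1 m2 N0 by (simp_all add: divide_le_eq mult.commute)
          then show "real j * D' / real N \<in> {0..dist k (\<phi> v k)}" "real (Suc j) * D' / real N \<in> {0..dist k (\<phi> v k)}"
            using D'0 by (auto simp: D'_def)
        qed
        have "dist (pt j) (pt (Suc j)) = \<bar>real j * D' / real N - real (Suc j) * D' / real N\<bar>"
          unfolding pt_def by (rule geodesic_segment_dist[OF \<gamma> a])
        also have "\<dots> = D' / real N" using D'0 N0 by (simp add: field_simps)
        finally show ?thesis .
      qed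
      also have "\<dots> < \<eta>"
        using DN v(3) N0 by (smt (verit, ccfv_SIG) D'_def divide_right_mono of_nat_0_le_iff)
      finally have "dist (pt j) (pt (Suc j)) < \<eta>" .
      moreover have "dist (pt j) (pt (Suc j)) = dist (kk j) (\<phi> u (kk (Suc j)))"
      proof -
        have "\<phi> (w j) (\<phi> u (kk (Suc j))) = \<phi> (w (Suc j)) (kk (Suc j))"
          using r1 r2 uc unfolding u_def
          by (simp add: act_mult[symmetric] G.m_assoc[symmetric])
        then show ?thesis using r1 r2 isom[OF r1(2), of "kk j" "\<phi> u (kk (Suc j))"] by simp
      qed
      ultimately show ?thesis using uc r1 r2 unfolding W_def u_def by auto
    qed
    have "w j \<in> prods G W j" if "j \<le> N" for j
      using that
    proof (induction j)
      case 0
      then show ?case by (simp add: w_def)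
    next
      case (Suc j)
      then have wj: "w j \<in> prods G W j" by simp
      have s: "inv\<^bsub>G\<^esub> (w j) \<otimes>\<^bsub>G\<^esub> w (Suc j) \<in> W" using step Suc by simp
      have c: "w j \<in> carrier G" "w (Suc j) \<in> carrier G" using rep[of j] rep[of "Suc j"] Suc by auto
      have "w (Suc j) = w j \<otimes>\<^bsub>G\<^esub> (inv\<^bsub>G\<^esub> (w j) \<otimes>\<^bsub>G\<^esub> w (Suc j))"
        using c by (simp add: G.m_assoc[symmetric])
      then show ?case using wj s by force
    qed
    then have "w N \<in> prods G W N" by simp
    then show "v \<in> prods G W N" using N0 by (simp add: w_def)
  qed
  moreover have "finite (prods G W N)" using \<eta>(2) by (simp add: W_def finite_prods)
  ultimately show ?thesis by (rule finite_subset)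
qed

lemma R_bound:
  assumes g: "g \<in> carrier G" and D: "D \<ge> 0"
  shows "\<exists>R. \<forall>x. dist x (\<phi> g x) \<le> D \<longrightarrow> (\<exists>u\<in>centralizer_of G g. dist x (\<phi> u x0) \<le> R)"
proof -
  interpret G: group G by (rule grp)
  obtain K where K: "compact K" "\<forall>x. \<exists>v\<in>carrier G. \<exists>k\<in>K. x = \<phi> v k" using cocpt by blast
  define S where "S = {v \<in> carrier G. \<exists>k\<in>K. dist k (\<phi> v k) \<le> D}"
  have finS: "finite S" unfolding S_def by (rule S_finite[OF K D])
  obtain M where M: "\<forall>k\<in>K. dist x0 k \<le> M"
    using compact_imp_bounded[OF K(1)] bounded_any_center by metis
  define H where "H v = (SOME h. h \<in> carrier G \<and> v = inv\<^bsub>G\<^esub> h \<otimes>\<^bsub>G\<^esub> g \<otimes>\<^bsub>G\<^esub> h)" for v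
  define R where "R = M + (\<Sum>v\<in>S. dist x0 (\<phi> (inv\<^bsub>G\<^esub> (H v)) x0))"
  have "\<forall>x. dist x (\<phi> g x) \<le> D \<longrightarrow> (\<exists>u\<in>centralizer_of G g. dist x (\<phi> u x0) \<le> R)"
  proof (intro allI impI)
    fix x assume x: "dist x (\<phi> g x) \<le> D"
    obtain h k where hk: "h \<in> carrier G" "k \<in> K" "x = \<phi> h k" using K(2) by blast
    define v where "v = inv\<^bsub>G\<^esub> h \<otimes>\<^bsub>G\<^esub> g \<otimes>\<^bsub>G\<^esub> h"
    have vc: "v \<in> carrier G" using hk g by (simp add: v_def)
    have "\<phi> h (\<phi> v k) = \<phi> g x"
      using hk g unfolding v_def by (simp add: act_mult[symmetric] G.m_assoc[symmetric])
    then have "dist k (\<phi> v k) = dist x (\<phi> g x)" using isom[OF hk(1), of k "\<phi> v k"] hk(3) by simp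
    then have "dist k (\<phi> v k) \<le> D" using x by simp
    then have vS: "v \<in> S" unfolding S_def using vc hk(2) by blast
    have "\<exists>h. h \<in> carrier G \<and> v = inv\<^bsub>G\<^esub> h \<otimes>\<^bsub>G\<^esub> g \<otimes>\<^bsub>G\<^esub> h" using hk v_def by blast
    then have h': "H v \<in> carrier G" "v = inv\<^bsub>G\<^esub> (H v) \<otimes>\<^bsub>G\<^esub> g \<otimes>\<^bsub>G\<^esub> (H v)"
      unfolding H_def by (metis (mono_tags, lifting) someI_ex)+
    define h' where "h' = H v"
    have h'c: "h' \<in> carrier G" and vh': "v = inv\<^bsub>G\<^esub> h' \<otimes>\<^bsub>G\<^esub> g \<otimes>\<^bsub>G\<^esub> h'" using h' by (auto simp: h'_def)
    define u where "u = h \<otimes>\<^bsub>G\<^esub> inv\<^bsub>G\<^esub> h'"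
    have uc: "u \<in> carrier G" using hk h'c by (simp add: u_def)
    have "g \<otimes>\<^bsub>G\<^esub> u = h \<otimes>\<^bsub>G\<^esub> v \<otimes>\<^bsub>G\<^esub> inv\<^bsub>G\<^esub> h'"
      using hk h'c g unfolding u_def v_def by (simp add: G.m_assoc[symmetric])
    also have "\<dots> = u \<otimes>\<^bsub>G\<^esub> g"
    proof -
      have cancel: "\<And>a b. a \<in> carrier G \<Longrightarrow> b \<in> carrier G \<Longrightarrow> a \<otimes>\<^bsub>G\<^esub> b \<otimes>\<^bsub>G\<^esub> inv\<^bsub>G\<^esub> b = a"
        by (simp add: G.m_assoc)
      show ?thesis using hk h'c g unfolding u_def vh' by (simp add: G.m_assoc[symmetric] cancel)
    qed
    finally have uZ: "u \<in> centralizer_of G g" using uc unfolding centralizer_of_def by simp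
    have xu: "x = \<phi> u (\<phi> h' k)"
      using hk h'c unfolding u_def by (simp add: act_mult act_inv1)
    have "dist x (\<phi> u x0) = dist (\<phi> h' k) x0" unfolding xu by (rule isom[OF uc])
    also have "\<dots> = dist k (\<phi> (inv\<^bsub>G\<^esub> h') x0)"
      using isom[OF h'c, of k "\<phi> (inv\<^bsub>G\<^esub> h') x0"] act_inv2[OF h'c] by simp
    also have "\<dots> \<le> dist k x0 + dist x0 (\<phi> (inv\<^bsub>G\<^esub> h') x0)" by (rule dist_triangle)
    also have "\<dots> \<le> M + (\<Sum>v\<in>S. dist x0 (\<phi> (inv\<^bsub>G\<^esub> (H v)) x0))"
    proof (rule add_mono)
      show "dist k x0 \<le> M" using M hk(2) by (simp add: dist_commute)
      show "dist x0 (\<phi> (inv\<^bsub>G\<^esub> h') x0) \<le> (\<Sum>v\<in>S. dist x0 (\<phi> (inv\<^bsub>G\<^esub> (H v)) x0))"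
        unfolding h'_def using finS vS by (intro member_le_sum) auto
    qed
    finally show "\<exists>u\<in>centralizer_of G g. dist x (\<phi> u x0) \<le> R" using uZ unfolding R_def by blast
  qed
  then show ?thesis by blast
qed

lemma isoG: "v \<in> carrier G \<Longrightarrow> (\<And>x y. dist (\<phi> v x) (\<phi> v y) = dist x y)"
  using isom by blast

lemma dir1:
  assumes g: "g \<in> carrier G" and \<alpha>: "\<alpha> \<in> boundary_fixed_points (\<phi> g)"
  shows "\<alpha> \<in> limit_set \<phi> x0 (centralizer_of G g)"
proof -
  have vb: "\<alpha> \<in> visual_boundary TYPE('a)" and fx: "boundary_map (\<phi> g) \<alpha> = \<alpha>"
    using \<alpha> unfolding boundary_fixed_points_def by auto
  obtain c'' where c'': "geodesic_ray c''" "\<alpha> = ray_class c''" using vb unfolding visual_boundary_def by blast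
  obtain c where c: "geodesic_ray c" "c 0 = x0" "asymptotic c'' c"
    using ray_exists[OF cat complete_X c''(1)] by blast
  have c\<alpha>: "c \<in> \<alpha>" using c c'' unfolding ray_class_def by auto
  define c1 where "c1 = (SOME c. c \<in> \<alpha>)"
  have c1: "c1 \<in> \<alpha>" unfolding c1_def by (rule someI[of "\<lambda>c. c \<in> \<alpha>", OF c\<alpha>])
  have "ray_class (\<phi> g \<circ> c1) = \<alpha>" using fx unfolding boundary_map_def c1_def .
  moreover have "c'' \<in> \<alpha>" using c'' asym_refl unfolding ray_class_def by auto
  ultimately have a1: "asymptotic (\<phi> g \<circ> c1) c''" unfolding ray_class_def by auto
  have a2: "asymptotic c'' c1" using c1 c'' unfolding ray_class_def by auto
  have "asymptotic c c1" using asym_trans[OF asym_sym[OF c(3)] a2] .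
  then have "asymptotic (\<phi> g \<circ> c) (\<phi> g \<circ> c1)" by (rule asym_comp[OF isoG[OF g]])
  then have "asymptotic (\<phi> g \<circ> c) c" using a1 c(3) asym_trans by blast
  then obtain B where B: "\<forall>t\<ge>0. dist (c t) (\<phi> g (c t)) \<le> B"
    unfolding asymptotic_def by (auto simp: dist_commute)
  define D where "D = dist x0 (\<phi> g x0)"
  have cD: "\<forall>t\<ge>0. dist (c t) (\<phi> g (c t)) \<le> D"
    using noninc[OF cat c(1) isoG[OF g] B] c(2) by (simp add: D_def)
  obtain R where R: "\<forall>x. dist x (\<phi> g x) \<le> D \<longrightarrow> (\<exists>u\<in>centralizer_of G g. dist x (\<phi> u x0) \<le> R)"
    using R_bound[OF g, of D x0] by (auto simp: D_def)
  have "\<forall>t\<ge>0. \<exists>y\<in>(\<lambda>v. \<phi> v x0) ` centralizer_of G g. dist (c t) y \<le> R"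
    using R cD by blast
  then have "in_cone_closure x0 ((\<lambda>v. \<phi> v x0) ` centralizer_of G g) \<alpha>"
    unfolding in_cone_closure_def using cone_bounded[OF cat c(1) c(2)] c\<alpha> c(2) by blast
  then show ?thesis using vb unfolding limit_set_def by blast
qed

lemma dir2:
  assumes g: "g \<in> carrier G" and \<alpha>: "\<alpha> \<in> limit_set \<phi> x0 (centralizer_of G g)"
  shows "\<alpha> \<in> boundary_fixed_points (\<phi> g)"
proof -
  interpret G: group G by (rule grp)
  have vb: "\<alpha> \<in> visual_boundary TYPE('a)" and cc: "in_cone_closure x0 ((\<lambda>v. \<phi> v x0) ` centralizer_of G g) \<alpha>"
    using \<alpha> unfolding limit_set_def by auto
  obtain c where c: "c \<in> \<alpha>" "c 0 = x0"
    and cone: "\<forall>r>0. \<forall>\<epsilon>>0. \<exists>x\<in>(\<lambda>v. \<phi> v x0) ` centralizer_of G g. dist x0 x > r \<and>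
           (\<exists>cx. geodesic_segment cx x0 x \<and> dist (cx r) (c r) < \<epsilon>)"
    using cc unfolding in_cone_closure_def by blast
  obtain c'' where c'': "geodesic_ray c''" "\<alpha> = ray_class c''" using vb unfolding visual_boundary_def by blast
  have cr: "geodesic_ray c" "asymptotic c'' c" using c c'' unfolding ray_class_def by auto
  define D where "D = dist x0 (\<phi> g x0)"
  have bd: "dist (c t) (\<phi> g (c t)) \<le> D + 2" if t: "t \<ge> 0" for t
  proof (cases "t = 0")
    case True then show ?thesis using c by (simp add: D_def)
  next
    case False
    then have t0: "t > 0" using t by simp
    obtain x cx where x: "x \<in> (\<lambda>v. \<phi> v x0) ` centralizer_of G g" "dist x0 x > t"
      "geodesic_segment cx x0 x" "dist (cx t) (c t) < 1"
      using cone t0 by (meson zero_less_one)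
    obtain u where u: "u \<in> centralizer_of G g" "x = \<phi> u x0" using x(1) by blast
    have uc: "u \<in> carrier G" and gu: "g \<otimes>\<^bsub>G\<^esub> u = u \<otimes>\<^bsub>G\<^esub> g" using u unfolding centralizer_of_def by auto
    have dx: "dist x (\<phi> g x) = D"
    proof -
      have "\<phi> g x = \<phi> u (\<phi> g x0)" using u(2) gu g uc by (metis act_mult)
      then show ?thesis using u(2) isom[OF uc] by (simp add: D_def)
    qed
    have s2: "geodesic_segment (\<phi> g \<circ> cx) (\<phi> g x0) (\<phi> g x)" by (rule seg_comp[OF isoG[OF g] x(3)])
    have "dist (cx t) ((\<phi> g \<circ> cx) t) \<le> (1 - t / dist x0 x) * D + (t / dist x0 x) * D"
      using CONV[OF cat x(3) s2] isom[OF g] x(2) t dx by (simp add: D_def)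
    also have "\<dots> = D" by (simp add: algebra_simps)
    finally have A: "dist (cx t) (\<phi> g (cx t)) \<le> D" by simp
    have "dist (c t) (\<phi> g (c t)) \<le> dist (c t) (cx t) + dist (cx t) (\<phi> g (c t))" by (rule dist_triangle)
    also have "\<dots> \<le> dist (c t) (cx t) + (dist (cx t) (\<phi> g (cx t)) + dist (\<phi> g (cx t)) (\<phi> g (c t)))"
      by (simp add: dist_triangle)
    also have "\<dots> \<le> 1 + (D + 1)" using x(4) A isom[OF g] by (simp add: dist_commute)
    finally show ?thesis by simp
  qed
  have a0: "asymptotic c (\<phi> g \<circ> c)" unfolding asymptotic_def using bd by auto
  define c1 where "c1 = (SOME c. c \<in> \<alpha>)"
  have c1: "c1 \<in> \<alpha>" unfolding c1_def by (rule someI[of "\<lambda>c. c \<in> \<alpha>", OF c(1)])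
  have a2: "asymptotic c'' c1" using c1 c'' unfolding ray_class_def by auto
  have "asymptotic c1 c" using asym_trans[OF asym_sym[OF a2] cr(2)] .
  then have "asymptotic (\<phi> g \<circ> c1) (\<phi> g \<circ> c)" by (rule asym_comp[OF isoG[OF g]])
  then have "asymptotic (\<phi> g \<circ> c1) c''"
    using asym_trans asym_sym a0 cr(2) by blast
  then have "ray_class (\<phi> g \<circ> c1) = \<alpha>" using c'' ray_class_eq by blast
  then have "boundary_map (\<phi> g) \<alpha> = \<alpha>" unfolding boundary_map_def c1_def .
  then show ?thesis using vb unfolding boundary_fixed_points_def by blast
qed

end

theorem theorem1:
  fixes G :: "('g, 'b) monoid_scheme" and \<phi> :: "'g \<Rightarrow> 'a::metric_space \<Rightarrow> 'a"
    and g :: 'g and x0 :: 'a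
  assumes "CAT0 TYPE('a)"
    and "geometric_action G \<phi>"
    and "g \<in> carrier G"
  shows "boundary_fixed_points (\<phi> g) = limit_set \<phi> x0 (centralizer_of G g)"
proof -
  interpret geo_cat G \<phi>
    by (intro geo_cat.intro geo_act.intro geo_cat_axioms.intro) (use assms in auto)
  show ?thesis using dir1[OF assms(3)] dir2[OF assms(3)] by blast
qed

end
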